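(* For every $\phi\in\mathcal C_{\rm per}$, every $f\in\mathcal V_{\rm per}$, and $p\in\{4,6\}$, $$\|\phi\|_p\le\sqrt{p/2}\,\|\phi_{\mathbf F}\|_{L^p(\Omega)},\qquad \|f\|_p\le\sqrt{p/2}\,\|f_{\mathbf F}\|_{L^p(\Omega)}.$$
   Context: Let $L>0$, let $N=2K+1$ be odd, $h=L/N$, and $\Omega=(0,L)^2$. Grid functions: - $\mathcal C_{\rm per}$: real grid functions $\phi_{i,j}$, $N$-periodic in $i$ and $j$, located at $(x_i,y_j)=((i-\frac12)h,(j-\frac12)h)$. - $\mathcal V_{\rm per}$: periodic vertex functions $f_{i+\frac12,j+\frac12}$ located at $(ih,jh)$. Trigonometric interpolants: - Every $\phi\in\mathcal C_{\rm per}$ has a unique representation $\phi_{i,j}=\sum_{\ell,m=-K}^K\hat\phi_{\ell,m}e^{2\pi\mathrm i(\ell x_i+my_j)/L}$, with trigonometric interpolant $\phi_{\mathbf F}(x,y)=\sum_{\ell,m=-K}^K\hat\phi_{\ell,m}e^{2\pi\mathrm i(\ell x+my)/L}$. - The interpolant $f_{\mathbf F}$ of a vertex function $f$ is defined in the same way, using the vertex nodes $(ih,jh)$. Discrete norms: for cell functions $\|\phi\|_p^p=h^2\sum_{i,j=1}^N|\phi_{i,j}|^p$, and for vertex functions $\|f\|_p^p=h^2\sum_{i,j=1}^N|f_{i+\frac12,j+\frac12}|^p$. *)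

theory Defs
  imports "HOL-Analysis.Analysis"
begin

text \<open>Grid setup: N = 2K+1, h = L/N. The node of index (i,j) is ((i - off) h, (j - off) h),
  where off = 1/2 for cell-centred functions and off = 0 for vertex functions
  (the vertex value f_{i+1/2,j+1/2} is stored as f i j).\<close>

definition grid_periodic :: "nat \<Rightarrow> (int \<Rightarrow> int \<Rightarrow> real) \<Rightarrow> bool" where
  "grid_periodic N g \<longleftrightarrow> (\<forall>i j. g (i + int N) j = g i j \<and> g i (j + int N) = g i j)"

definition node :: "real \<Rightarrow> nat \<Rightarrow> real \<Rightarrow> int \<Rightarrow> real" where
  "node L N off i = (real_of_int i - off) * (L / real N)"

definition trig_mode :: "real \<Rightarrow> int \<Rightarrow> int \<Rightarrow> real \<Rightarrow> real \<Rightarrow> complex" where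
  "trig_mode L l m x y = exp (2 * pi * \<i> * complex_of_real ((real_of_int l * x + real_of_int m * y) / L))"

definition trig_coeffs :: "real \<Rightarrow> nat \<Rightarrow> real \<Rightarrow> (int \<Rightarrow> int \<Rightarrow> real) \<Rightarrow> int \<Rightarrow> int \<Rightarrow> complex" where
  "trig_coeffs L K off g = (THE c.
      (\<forall>l m. \<not> (\<bar>l\<bar> \<le> int K \<and> \<bar>m\<bar> \<le> int K) \<longrightarrow> c l m = 0) \<and>
      (\<forall>i j. complex_of_real (g i j) =
          (\<Sum>l\<in>{- int K..int K}. \<Sum>m\<in>{- int K..int K}.
              c l m * trig_mode L l m (node L (2*K+1) off i) (node L (2*K+1) off j))))"

definition trig_interp :: "real \<Rightarrow> nat \<Rightarrow> real \<Rightarrow> (int \<Rightarrow> int \<Rightarrow> real) \<Rightarrow> real \<Rightarrow> real \<Rightarrow> complex" where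
  "trig_interp L K off g x y =
     (\<Sum>l\<in>{- int K..int K}. \<Sum>m\<in>{- int K..int K}. trig_coeffs L K off g l m * trig_mode L l m x y)"

definition disc_norm :: "real \<Rightarrow> nat \<Rightarrow> nat \<Rightarrow> (int \<Rightarrow> int \<Rightarrow> real) \<Rightarrow> real" where
  "disc_norm L N p g = ((L / real N)^2 * (\<Sum>i\<in>{1..int N}. \<Sum>j\<in>{1..int N}. \<bar>g i j\<bar> ^ p)) powr (1 / real p)"

definition Lp_norm_box :: "real \<Rightarrow> nat \<Rightarrow> (real \<Rightarrow> real \<Rightarrow> complex) \<Rightarrow> real" where
  "Lp_norm_box L p u = (LINT z : {0<..<L} \<times> {0<..<L} | lborel. cmod (u (fst z) (snd z)) ^ p) powr (1 / real p)"

end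

theory Submission
  imports Defs
begin
definition E :: "real \<Rightarrow> int \<Rightarrow> real \<Rightarrow> complex" where
  "E L k x = exp (2 * pi * \<i> * complex_of_real (real_of_int k * x / L))"

lemma trig_mode_E: "trig_mode L l m x y = E L l x * E L m y"
  unfolding trig_mode_def E_def
  by (simp add: add_divide_distrib distrib_left exp_add[symmetric])

lemma E_add: "E L k x * E L k' x = E L (k + k') x"
  unfolding E_def by (simp add: exp_add[symmetric] algebra_simps add_divide_distrib)

lemma E_cnj: "cnj (E L k x) = E L (- k) x"
  unfolding E_def exp_cnj by simp

lemma E_0 [simp]: "E L 0 x = 1"
  unfolding E_def by simp

lemma E_norm [simp]: "cmod (E L k x) = 1"
  unfolding E_def by (simp add: norm_exp_eq_Re)

lemma sum_int_shift:
  "(\<Sum>i\<in>{a..a + int N - 1}. f i) = (\<Sum>k<N. f (a + int k))"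
proof -
  have "{a..a + int N - 1} = (\<lambda>k. a + int k) ` {..<N}"
  proof (rule set_eqI, rule iffI)
    fix x assume "x \<in> {a..a + int N - 1}"
    then show "x \<in> (\<lambda>k. a + int k) ` {..<N}"
      by (intro image_eqI[of _ _ "nat (x - a)"]) auto
  qed auto
  moreover have "inj_on (\<lambda>k. a + int k) {..<N}" by (auto simp: inj_on_def)
  ultimately show ?thesis by (simp add: sum.reindex)
qed

lemma node_E:
  assumes "L > 0" "N > 0"
  shows "E L k (node L N off i) = exp (2 * pi * \<i> * complex_of_real (real_of_int k * (real_of_int i - off) / real N))"
proof -
  have "real_of_int k * ((real_of_int i - off) * (L / real N)) / L = real_of_int k * (real_of_int i - off) / real N"
    using assms by (simp add: field_simps)
  then show ?thesis unfolding E_def node_def by simp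
qed
lemma exp_2pi_int: "exp (2 * pi * \<i> * complex_of_real (real_of_int t)) = 1"
  using exp_2pi_1_int[of t] by (simp add: algebra_simps)

lemma geo0:
  fixes N :: nat and t :: int
  assumes "N > 0"
  shows "(\<Sum>k<N. exp (2 * pi * \<i> * complex_of_real (real_of_int t * real k / real N)))
         = (if int N dvd t then of_nat N else 0)"
proof -
  define z where "z = exp (2 * pi * \<i> * complex_of_real (real_of_int t / real N))"
  have zk: "exp (2 * pi * \<i> * complex_of_real (real_of_int t * real k / real N)) = z ^ k" for k
    unfolding z_def exp_of_nat_mult[symmetric] by (simp add: algebra_simps)
  have zN: "z ^ N = 1"
  proof -
    have "z ^ N = exp (2 * pi * \<i> * complex_of_real (real_of_int t))"
      unfolding z_def exp_of_nat_mult[symmetric] using assms by (simp add: algebra_simps)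
    also have "\<dots> = 1" by (rule exp_2pi_int)
    finally show ?thesis .
  qed
  have z1: "z = 1 \<longleftrightarrow> int N dvd t"
  proof
    assume "z = 1"
    then obtain n :: int where n: "2 * pi * (real_of_int t / real N) = of_int (2*n) * pi"
      unfolding z_def exp_eq_1 by (auto simp: algebra_simps)
    then have "real_of_int t = real_of_int n * real N" using assms by (simp add: field_simps)
    then have "t = n * int N" by (metis of_int_eq_iff of_int_mult of_int_of_nat_eq)
    then show "int N dvd t" by simp
  next
    assume "int N dvd t"
    then obtain n where "t = int N * n" by auto
    then have "real_of_int t / real N = real_of_int n" using assms by simp
    then show "z = 1" unfolding z_def using exp_2pi_int by simp
  qed
  show ?thesis
  proof (cases "int N dvd t")
    case True
    then show ?thesis using z1 zk by simp
  next
    case False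
    then have "z \<noteq> 1" using z1 by simp
    then show ?thesis using False zk zN by (simp add: geometric_sum)
  qed
qed

lemma exp_split: "exp (2*pi*\<i>*complex_of_real (x+y)) = exp(2*pi*\<i>*complex_of_real x) * exp(2*pi*\<i>*complex_of_real y)"
  by (simp only: of_real_add distrib_left exp_add)

lemma disc_sum:
  assumes "L > 0" "N > 0"
  shows "(\<Sum>i\<in>{1..int N}. E L t (node L N off i)) =
     (if int N dvd t then of_nat N * exp (2 * pi * \<i> * complex_of_real (real_of_int t * (1 - off) / real N)) else 0)"
proof -
  define c where "c = exp (2 * pi * \<i> * complex_of_real (real_of_int t * (1 - off) / real N))"
  have "(\<Sum>i\<in>{1..int N}. E L t (node L N off i)) = (\<Sum>k<N. E L t (node L N off (1 + int k)))"
    using sum_int_shift[of "\<lambda>i. E L t (node L N off i)" 1 N] by simp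
  also have "\<dots> = (\<Sum>k<N. c * exp (2 * pi * \<i> * complex_of_real (real_of_int t * real k / real N)))"
  proof (rule sum.cong[OF refl])
    fix k assume "k \<in> {..<N}"
    have "real_of_int t * (real_of_int (1 + int k) - off) / real N = real_of_int t * (1 - off) / real N + real_of_int t * real k / real N"
      using assms by (simp add: field_simps)
    then show "E L t (node L N off (1 + int k)) = c * exp (2 * pi * \<i> * complex_of_real (real_of_int t * real k / real N))"
      unfolding node_E[OF assms] c_def by (simp only: exp_split)
  qed
  also have "\<dots> = c * (if int N dvd t then of_nat N else 0)"
    by (simp only: sum_distrib_left[symmetric] geo0[OF assms(2)])
  finally show ?thesis unfolding c_def by simp
qed

lemma disc_sum_norm:
  assumes "L > 0" "N > 0"
  shows "cmod (\<Sum>i\<in>{1..int N}. E L t (node L N off i)) = (if int N dvd t then real N else 0)"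
  unfolding disc_sum[OF assms] by (simp add: norm_mult norm_exp_eq_Re)

lemma disc_orth:
  assumes "L > 0" "\<bar>l\<bar> \<le> int K" "\<bar>l0\<bar> \<le> int K"
  shows "(\<Sum>i\<in>{1..int (2*K+1)}. E L (l - l0) (node L (2*K+1) off i)) = (if l = l0 then of_nat (2*K+1) else 0)"
proof (cases "l = l0")
  case True then show ?thesis by simp
next
  case False
  have "\<not> int (2*K+1) dvd (l - l0)"
  proof
    assume "int (2*K+1) dvd (l - l0)"
    then obtain r where r: "l - l0 = int (2*K+1) * r" by auto
    have "r \<noteq> 0" using False r by auto
    then have "\<bar>l - l0\<bar> \<ge> int (2*K+1)" using r by (simp add: abs_mult)
    then show False using assms by linarith
  qed
  then show ?thesis using disc_sum[OF assms(1), of "2*K+1" "l - l0" off] False by simp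
qed

lemma dft_geo:
  fixes u :: int
  shows "(\<Sum>l\<in>{- int K..int K}. exp (2 * pi * \<i> * complex_of_real (real_of_int u * real_of_int l / real (2*K+1))))
      = (if int (2*K+1) dvd u then of_nat (2*K+1) else 0)"
proof -
  define N where "N = 2*K+1"
  have N0: "N > 0" unfolding N_def by simp
  have rng: "{- int K..int K} = {- int K..- int K + int N - 1}" unfolding N_def by simp
  define c where "c = exp (2 * pi * \<i> * complex_of_real (real_of_int u * (- real K) / real N))"
  have "(\<Sum>l\<in>{- int K..int K}. exp (2 * pi * \<i> * complex_of_real (real_of_int u * real_of_int l / real N)))
     = (\<Sum>k<N. exp (2 * pi * \<i> * complex_of_real (real_of_int u * real_of_int (- int K + int k) / real N)))"
    unfolding rng by (rule sum_int_shift)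
  also have "\<dots> = (\<Sum>k<N. c * exp (2 * pi * \<i> * complex_of_real (real_of_int u * real k / real N)))"
  proof (rule sum.cong[OF refl])
    fix k assume "k \<in> {..<N}"
    have "real_of_int u * real_of_int (- int K + int k) / real N = real_of_int u * (- real K) / real N + real_of_int u * real k / real N"
      using N0 by (simp add: field_simps)
    then show "exp (2 * pi * \<i> * complex_of_real (real_of_int u * real_of_int (- int K + int k) / real N)) = c * exp (2 * pi * \<i> * complex_of_real (real_of_int u * real k / real N))"
      unfolding c_def by (simp only: exp_split)
  qed
  also have "\<dots> = c * (if int N dvd u then of_nat N else 0)"
    by (simp only: sum_distrib_left[symmetric] geo0[OF N0])
  also have "\<dots> = (if int N dvd u then of_nat N else 0)"
  proof (cases "int N dvd u")
    case True
    then obtain r where r: "u = int N * r" by auto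
    have "real_of_int u * (- real K) / real N = real_of_int (- r * int K)" using N0 r by simp
    then have "c = 1" unfolding c_def using exp_2pi_int by presburger
    then show ?thesis by simp
  qed simp
  finally show ?thesis unfolding N_def .
qed

lemma swap4:
  "(\<Sum>l\<in>A. \<Sum>m\<in>B. \<Sum>a\<in>C. \<Sum>b\<in>D. F l m a b) = (\<Sum>a\<in>C. \<Sum>b\<in>D. \<Sum>l\<in>A. \<Sum>m\<in>B. F l m a b)"
proof -
  have "(\<Sum>l\<in>A. \<Sum>m\<in>B. \<Sum>a\<in>C. \<Sum>b\<in>D. F l m a b) = (\<Sum>l\<in>A. \<Sum>a\<in>C. \<Sum>b\<in>D. \<Sum>m\<in>B. F l m a b)"
    by (rule sum.cong[OF refl]) (simp add: sum.swap[of _ B] sum.swap[of _ B D])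
  also have "\<dots> = (\<Sum>a\<in>C. \<Sum>b\<in>D. \<Sum>l\<in>A. \<Sum>m\<in>B. F l m a b)"
    by (simp add: sum.swap[of _ A])
  finally show ?thesis .
qed

lemma periodic_shift:
  assumes "grid_periodic N g"
  shows "g (i + int N * k) j = g i j" "g i (j + int N * k) = g i j"
proof -
  have A: "g (i + int N * int n) j = g i j" for i j n
    by (induction n arbitrary: i) (use assms in \<open>auto simp: grid_periodic_def distrib_left add.assoc[symmetric]\<close>)
  have B: "g i (j + int N * int n) = g i j" for i j n
    by (induction n arbitrary: j) (use assms in \<open>auto simp: grid_periodic_def distrib_left add.assoc[symmetric]\<close>)
  show "g (i + int N * k) j = g i j"
  proof (cases "k \<ge> 0")
    case True then show ?thesis using A[where n="nat k" and i=i and j=j] by simp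
  next
    case False
    then have "g (i + int N * k) j = g (i + int N * k + int N * int (nat (-k))) j" using A by presburger
    also have "\<dots> = g i j" using False by simp
    finally show ?thesis .
  qed
  show "g i (j + int N * k) = g i j"
  proof (cases "k \<ge> 0")
    case True then show ?thesis using B[where n="nat k" and i=i and j=j] by simp
  next
    case False
    then have "g i (j + int N * k) = g i (j + int N * k + int N * int (nat (-k)))" using B by presburger
    also have "\<dots> = g i j" using False by simp
    finally show ?thesis .
  qed
qed

lemma sum_select:
  assumes "N > 0"
  shows "(\<Sum>a\<in>{1..int N}. (if int N dvd (i - a) then h a else 0)) = h ((i - 1) mod int N + 1)"
proof -
  have "(\<Sum>a\<in>{1..int N}. (if int N dvd (i - a) then h a else 0)) = (\<Sum>a\<in>{1..int N}. (if a = (i - 1) mod int N + 1 then h a else 0))"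
  proof (rule sum.cong[OF refl])
    fix a assume a: "a \<in> {1..int N}"
    have "int N dvd (i - a) \<longleftrightarrow> a = (i - 1) mod int N + 1"
    proof
      assume "int N dvd (i - a)"
      then have "(i - 1) mod int N = (a - 1) mod int N"
        by (metis (no_types) diff_diff_eq2 diff_add_cancel mod_eq_dvd_iff dvd_minus_iff minus_diff_eq)
      also have "(a - 1) mod int N = a - 1" using a by (simp add: mod_pos_pos_trivial)
      finally show "a = (i - 1) mod int N + 1" by simp
    next
      assume "a = (i - 1) mod int N + 1"
      then have "i - a = int N * ((i - 1) div int N)" by (simp add: algebra_simps minus_mod_eq_mult_div[symmetric])
      then show "int N dvd (i - a)" by simp
    qed
    then show "(if int N dvd (i - a) then h a else 0) = (if a = (i - 1) mod int N + 1 then h a else 0)" by simp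
  qed
  also have "\<dots> = h ((i - 1) mod int N + 1)"
  proof -
    have "(i - 1) mod int N < int N" using assms by simp
    moreover have "(i - 1) mod int N \<ge> 0" using assms by simp
    ultimately have "(i - 1) mod int N + 1 \<in> {1..int N}" by simp
    then show ?thesis by (simp add: sum.delta)
  qed
  finally show ?thesis .
qed

lemma periodic_rep:
  assumes "grid_periodic N g"
  shows "g ((i - 1) mod int N + 1) ((j - 1) mod int N + 1) = g i j"
proof -
  have i: "i = ((i - 1) mod int N + 1) + int N * ((i - 1) div int N)" by simp
  have j: "j = ((j - 1) mod int N + 1) + int N * ((j - 1) div int N)" by simp
  have "g i j = g ((i - 1) mod int N + 1) j"
    using periodic_shift(1)[OF assms, of "(i - 1) mod int N + 1" "(i - 1) div int N" j] i by simp
  also have "\<dots> = g ((i - 1) mod int N + 1) ((j - 1) mod int N + 1)"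
    using periodic_shift(2)[OF assms, of "(i - 1) mod int N + 1" "(j - 1) mod int N + 1" "(j - 1) div int N"] j by simp
  finally show ?thesis by simp
qed

definition cf :: "real \<Rightarrow> nat \<Rightarrow> real \<Rightarrow> (int \<Rightarrow> int \<Rightarrow> real) \<Rightarrow> int \<Rightarrow> int \<Rightarrow> complex" where
  "cf L K off g l m = (if \<bar>l\<bar> \<le> int K \<and> \<bar>m\<bar> \<le> int K then
     (1 / of_nat ((2*K+1)^2)) * (\<Sum>a\<in>{1..int (2*K+1)}. \<Sum>b\<in>{1..int (2*K+1)}.
        complex_of_real (g a b) * cnj (trig_mode L l m (node L (2*K+1) off a) (node L (2*K+1) off b))) else 0)"

lemma EX_lem:
  assumes "L > 0" "N > 0"
  shows "E L l (node L N off i) * E L (-l) (node L N off a) = exp (2 * pi * \<i> * complex_of_real (real_of_int (i - a) * real_of_int l / real N))"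
proof -
  have "real_of_int (i - a) * real_of_int l / real N = real_of_int l * (real_of_int i - off) / real N + real_of_int (-l) * (real_of_int a - off) / real N"
    using assms by (simp add: field_simps)
  then show ?thesis unfolding node_E[OF assms] by (simp only: exp_split)
qed

lemma interp_cf:
  assumes L: "L > 0" and g: "grid_periodic (2*K+1) g"
  shows "complex_of_real (g i j) = (\<Sum>l\<in>{- int K..int K}. \<Sum>m\<in>{- int K..int K}.
              cf L K off g l m * trig_mode L l m (node L (2*K+1) off i) (node L (2*K+1) off j))"
proof -
  define N where "N = 2*K+1"
  have N0: "N > 0" unfolding N_def by simp
  define nd where "nd = node L N off"
  define X where "X = (\<lambda>l a i. exp (2 * pi * \<i> * complex_of_real (real_of_int (i - a) * real_of_int l / real N)))"
  have Dsum: "(\<Sum>l\<in>{- int K..int K}. X l a i) = (if int N dvd (i - a) then of_nat N else 0)" for a i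
    unfolding X_def N_def by (rule dft_geo)
  have "(\<Sum>l\<in>{- int K..int K}. \<Sum>m\<in>{- int K..int K}. cf L K off g l m * trig_mode L l m (nd i) (nd j))
     = (\<Sum>l\<in>{- int K..int K}. \<Sum>m\<in>{- int K..int K}. \<Sum>a\<in>{1..int N}. \<Sum>b\<in>{1..int N}.
          (1 / of_nat (N^2)) * (complex_of_real (g a b) * (X l a i * X m b j)))"
  proof (intro sum.cong refl)
    fix l m assume l: "l \<in> {- int K..int K}" and m: "m \<in> {- int K..int K}"
    have "cf L K off g l m * trig_mode L l m (nd i) (nd j) =
      (1 / of_nat (N^2)) * (\<Sum>a\<in>{1..int N}. \<Sum>b\<in>{1..int N}.
        complex_of_real (g a b) * cnj (trig_mode L l m (nd a) (nd b)) * trig_mode L l m (nd i) (nd j))"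
      using l m unfolding cf_def N_def nd_def by (simp add: sum_distrib_right abs_le_iff mult.assoc)
    also have "\<dots> = (\<Sum>a\<in>{1..int N}. \<Sum>b\<in>{1..int N}.
          (1 / of_nat (N^2)) * (complex_of_real (g a b) * (X l a i * X m b j)))"
    proof -
      have "cnj (trig_mode L l m (nd a) (nd b)) * trig_mode L l m (nd i) (nd j) = X l a i * X m b j" for a b
      proof -
        have "cnj (trig_mode L l m (nd a) (nd b)) * trig_mode L l m (nd i) (nd j)
            = (E L l (nd i) * E L (-l) (nd a)) * (E L m (nd j) * E L (-m) (nd b))"
          unfolding trig_mode_E by (simp add: E_cnj mult_ac)
        also have "\<dots> = X l a i * X m b j"
          unfolding nd_def X_def EX_lem[OF L N0] ..
        finally show ?thesis .
      qed
      then show ?thesis by (simp add: sum_distrib_left mult.assoc)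
    qed
    finally show "cf L K off g l m * trig_mode L l m (nd i) (nd j) = (\<Sum>a\<in>{1..int N}. \<Sum>b\<in>{1..int N}.
          (1 / of_nat (N^2)) * (complex_of_real (g a b) * (X l a i * X m b j)))" .
  qed
  also have "\<dots> = (\<Sum>a\<in>{1..int N}. \<Sum>b\<in>{1..int N}. \<Sum>l\<in>{- int K..int K}. \<Sum>m\<in>{- int K..int K}.
          (1 / of_nat (N^2)) * (complex_of_real (g a b) * (X l a i * X m b j)))"
    by (rule swap4)
  also have "\<dots> = (\<Sum>a\<in>{1..int N}. \<Sum>b\<in>{1..int N}.
          (1 / of_nat (N^2)) * (complex_of_real (g a b) * ((\<Sum>l\<in>{- int K..int K}. X l a i) * (\<Sum>m\<in>{- int K..int K}. X m b j))))"
    by (intro sum.cong refl) (subst sum_product, simp add: sum_distrib_left)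
  also have "\<dots> = (\<Sum>a\<in>{1..int N}. \<Sum>b\<in>{1..int N}.
          (if int N dvd (i - a) then (if int N dvd (j - b) then complex_of_real (g a b) else 0) else 0))"
    unfolding Dsum using N0 by (intro sum.cong refl) (simp add: power2_eq_square)
  also have "\<dots> = (\<Sum>a\<in>{1..int N}. (if int N dvd (i - a) then (\<Sum>b\<in>{1..int N}. (if int N dvd (j - b) then complex_of_real (g a b) else 0)) else 0))"
    by (intro sum.cong refl) simp
  also have "\<dots> = complex_of_real (g ((i - 1) mod int N + 1) ((j - 1) mod int N + 1))"
    using sum_select[OF N0, of i "\<lambda>a. (\<Sum>b\<in>{1..int N}. (if int N dvd (j - b) then complex_of_real (g a b) else 0))"]
      sum_select[OF N0, of j "\<lambda>b. complex_of_real (g ((i - 1) mod int N + 1) b)"] by simp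
  also have "\<dots> = complex_of_real (g i j)"
    using periodic_rep[of N g i j] g unfolding N_def by simp
  finally show ?thesis unfolding nd_def N_def by simp
qed

lemma sum_if_out: "(\<Sum>m\<in>B. if P then f m else 0) = (if P then (\<Sum>m\<in>B. f m) else 0)"
  by simp

lemma cf_unique:
  assumes L: "L > 0"
    and c0: "\<forall>l m. \<not> (\<bar>l\<bar> \<le> int K \<and> \<bar>m\<bar> \<le> int K) \<longrightarrow> c l m = 0"
    and ci: "\<forall>i j. complex_of_real (g i j) =
          (\<Sum>l\<in>{- int K..int K}. \<Sum>m\<in>{- int K..int K}.
              c l m * trig_mode L l m (node L (2*K+1) off i) (node L (2*K+1) off j))"
  shows "c = cf L K off g"
proof (intro ext)
  fix l0 m0
  define N where "N = 2*K+1"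
  have N0: "N > 0" unfolding N_def by simp
  define nd where "nd = node L N off"
  show "c l0 m0 = cf L K off g l0 m0"
  proof (cases "\<bar>l0\<bar> \<le> int K \<and> \<bar>m0\<bar> \<le> int K")
    case False
    then have "cf L K off g l0 m0 = 0" unfolding cf_def by (simp only: if_False)
    then show ?thesis using c0 False by simp
  next
    case True
    have "cf L K off g l0 m0 = (1 / of_nat (N^2)) * (\<Sum>a\<in>{1..int N}. \<Sum>b\<in>{1..int N}.
        complex_of_real (g a b) * cnj (trig_mode L l0 m0 (nd a) (nd b)))"
      using True unfolding cf_def N_def nd_def by simp
    also have "\<dots> = (1 / of_nat (N^2)) * (\<Sum>a\<in>{1..int N}. \<Sum>b\<in>{1..int N}.
        \<Sum>l\<in>{- int K..int K}. \<Sum>m\<in>{- int K..int K}. c l m * (E L (l - l0) (nd a) * E L (m - m0) (nd b)))"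
    proof -
      have "complex_of_real (g a b) * cnj (trig_mode L l0 m0 (nd a) (nd b)) =
         (\<Sum>l\<in>{- int K..int K}. \<Sum>m\<in>{- int K..int K}. c l m * (E L (l - l0) (nd a) * E L (m - m0) (nd b)))" for a b
      proof -
        have "complex_of_real (g a b) * cnj (trig_mode L l0 m0 (nd a) (nd b)) =
          (\<Sum>l\<in>{- int K..int K}. \<Sum>m\<in>{- int K..int K}. c l m * (trig_mode L l m (nd a) (nd b) * cnj (trig_mode L l0 m0 (nd a) (nd b))))"
          using ci unfolding nd_def N_def by (simp add: sum_distrib_right mult.assoc)
        also have "\<dots> = (\<Sum>l\<in>{- int K..int K}. \<Sum>m\<in>{- int K..int K}. c l m * (E L (l - l0) (nd a) * E L (m - m0) (nd b)))"
        proof (intro sum.cong refl)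
          fix l m
          have "trig_mode L l m (nd a) (nd b) * cnj (trig_mode L l0 m0 (nd a) (nd b)) =
              (E L l (nd a) * E L (-l0) (nd a)) * (E L m (nd b) * E L (-m0) (nd b))"
            unfolding trig_mode_E by (simp add: E_cnj mult_ac)
          also have "\<dots> = E L (l - l0) (nd a) * E L (m - m0) (nd b)"
            unfolding E_add by simp
          finally show "c l m * (trig_mode L l m (nd a) (nd b) * cnj (trig_mode L l0 m0 (nd a) (nd b))) = c l m * (E L (l - l0) (nd a) * E L (m - m0) (nd b))" by simp
        qed
        finally show ?thesis .
      qed
      then show ?thesis by simp
    qed
    also have "\<dots> = (1 / of_nat (N^2)) * (\<Sum>l\<in>{- int K..int K}. \<Sum>m\<in>{- int K..int K}.
        c l m * ((\<Sum>a\<in>{1..int N}. E L (l - l0) (nd a)) * (\<Sum>b\<in>{1..int N}. E L (m - m0) (nd b))))"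
    proof -
      have inner: "c l m * ((\<Sum>a\<in>{1..int N}. E L (l - l0) (nd a)) * (\<Sum>b\<in>{1..int N}. E L (m - m0) (nd b)))
         = (\<Sum>a\<in>{1..int N}. \<Sum>b\<in>{1..int N}. c l m * (E L (l - l0) (nd a) * E L (m - m0) (nd b)))" for l m
        by (subst sum_product, simp add: sum_distrib_left)
      show ?thesis by (subst swap4) (simp only: inner)
    qed
    also have "\<dots> = (1 / of_nat (N^2)) * (\<Sum>l\<in>{- int K..int K}. \<Sum>m\<in>{- int K..int K}.
        (if l = l0 then (if m = m0 then c l m * of_nat N * of_nat N else 0) else 0))"
    proof (intro arg_cong[where f="\<lambda>x. _ * x"] sum.cong refl)
      fix l m assume l: "l \<in> {- int K..int K}" and m: "m \<in> {- int K..int K}"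
      have "(\<Sum>a\<in>{1..int N}. E L (l - l0) (nd a)) = (if l = l0 then of_nat N else 0)"
        unfolding nd_def N_def by (rule disc_orth[OF L]) (use l True in auto)
      moreover have "(\<Sum>b\<in>{1..int N}. E L (m - m0) (nd b)) = (if m = m0 then of_nat N else 0)"
        unfolding nd_def N_def by (rule disc_orth[OF L]) (use m True in auto)
      ultimately show "c l m * ((\<Sum>a\<in>{1..int N}. E L (l - l0) (nd a)) * (\<Sum>b\<in>{1..int N}. E L (m - m0) (nd b))) =
        (if l = l0 then (if m = m0 then c l m * of_nat N * of_nat N else 0) else 0)" by simp
    qed
    also have "\<dots> = c l0 m0"
      using True N0 by (simp add: sum_if_out sum.delta power2_eq_square abs_le_iff)
    finally show ?thesis by simp
  qed
qed

lemma trig_coeffs_cf: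
  assumes L: "L > 0" and g: "grid_periodic (2*K+1) g"
  shows "trig_coeffs L K off g = cf L K off g"
  unfolding trig_coeffs_def
proof (rule the_equality)
  show "(\<forall>l m. \<not> (\<bar>l\<bar> \<le> int K \<and> \<bar>m\<bar> \<le> int K) \<longrightarrow> cf L K off g l m = 0) \<and>
    (\<forall>i j. complex_of_real (g i j) = (\<Sum>l\<in>{- int K..int K}. \<Sum>m\<in>{- int K..int K}.
       cf L K off g l m * trig_mode L l m (node L (2*K+1) off i) (node L (2*K+1) off j)))"
    using interp_cf[OF L g] by (simp add: cf_def)
next
  fix c assume "(\<forall>l m. \<not> (\<bar>l\<bar> \<le> int K \<and> \<bar>m\<bar> \<le> int K) \<longrightarrow> c l m = 0) \<and>
    (\<forall>i j. complex_of_real (g i j) = (\<Sum>l\<in>{- int K..int K}. \<Sum>m\<in>{- int K..int K}.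
       c l m * trig_mode L l m (node L (2*K+1) off i) (node L (2*K+1) off j)))"
  then show "c = cf L K off g" using cf_unique[OF L] by blast
qed

lemma trig_interp_node:
  assumes L: "L > 0" and g: "grid_periodic (2*K+1) g"
  shows "trig_interp L K off g (node L (2*K+1) off i) (node L (2*K+1) off j) = complex_of_real (g i j)"
  unfolding trig_interp_def trig_coeffs_cf[OF L g] using interp_cf[OF L g] by simp

lemma card_class1:
  fixes M q N :: nat and l :: int
  assumes N0: "N > 0" and Mq: "2*M+1 \<le> q*N"
  shows "card {l'\<in>{- int M..int M}. int N dvd (l - l')} \<le> q"
proof -
  define A where "A = {l'\<in>{- int M..int M}. int N dvd (l - l')}"
  have inj: "inj_on (\<lambda>l'. (l' + int M) div int N) A"
  proof (rule inj_onI)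
    fix x y assume x: "x \<in> A" and y: "y \<in> A" and e: "(x + int M) div int N = (y + int M) div int N"
    have d1: "int N dvd (l - x)" "int N dvd (l - y)" using x y unfolding A_def by auto
    have "(x + int M) - (y + int M) = (l - y) - (l - x)" by simp
    moreover have "int N dvd ((l - y) - (l - x))" using d1 by (rule dvd_diff[rotated])
    ultimately have "int N dvd ((x + int M) - (y + int M))" by (simp only:)
    then have m: "(x + int M) mod int N = (y + int M) mod int N"
      by (simp only: mod_eq_dvd_iff)
    have "x + int M = (x + int M) div int N * int N + (x + int M) mod int N" by (rule div_mult_mod_eq[symmetric])
    also have "\<dots> = (y + int M) div int N * int N + (y + int M) mod int N" by (simp only: e m)
    also have "\<dots> = y + int M" by (rule div_mult_mod_eq)
    finally show "x = y" by simp
  qed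
  have img: "(\<lambda>l'. (l' + int M) div int N) ` A \<subseteq> {0..<int q}"
  proof
    fix z assume "z \<in> (\<lambda>l'. (l' + int M) div int N) ` A"
    then obtain x where x: "x \<in> A" and z: "z = (x + int M) div int N" by auto
    have xr: "x \<le> int M" "- int M \<le> x" using x unfolding A_def by auto
    have "int (2*M+1) \<le> int (q*N)" using Mq by (simp only: of_nat_le_iff)
    then have qn: "2 * int M + 1 \<le> int q * int N" by simp
    have x1: "0 \<le> x + int M" "x + int M < int q * int N" using xr qn by linarith+
    have Np: "int N > 0" using N0 by simp
    have "0 \<le> z" unfolding z using x1(1) Np by (simp add: pos_imp_zdiv_nonneg_iff)
    moreover have "z < int q"
    proof -
      have "x + int M = z * int N + (x + int M) mod int N" unfolding z by (rule div_mult_mod_eq[symmetric])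
      moreover have "(x + int M) mod int N \<ge> 0" using Np by simp
      ultimately have "z * int N < int q * int N" using x1(2) by linarith
      then show ?thesis using Np by (simp add: mult_less_cancel_right)
    qed
    ultimately show "z \<in> {0..<int q}" by simp
  qed
  have "card A \<le> card {0..<int q}"
    using card_inj_on_le[OF inj img] by simp
  then show ?thesis unfolding A_def by simp
qed

lemma card_class:
  fixes M q N :: nat and n :: "int \<times> int"
  assumes N0: "N > 0" and Mq: "2*M+1 \<le> q*N"
  shows "card {n'\<in>{- int M..int M} \<times> {- int M..int M}. int N dvd (fst n - fst n') \<and> int N dvd (snd n - snd n')} \<le> q^2"
proof -
  have "{n'\<in>{- int M..int M} \<times> {- int M..int M}. int N dvd (fst n - fst n') \<and> int N dvd (snd n - snd n')}
    = {l'\<in>{- int M..int M}. int N dvd (fst n - l')} \<times> {l'\<in>{- int M..int M}. int N dvd (snd n - l')}"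
    by auto
  then have "card {n'\<in>{- int M..int M} \<times> {- int M..int M}. int N dvd (fst n - fst n') \<and> int N dvd (snd n - snd n')}
     = card {l'\<in>{- int M..int M}. int N dvd (fst n - l')} * card {l'\<in>{- int M..int M}. int N dvd (snd n - l')}"
    by (simp add: card_cartesian_product)
  also have "\<dots> \<le> q * q"
    using card_class1[OF assms] by (intro mult_mono) auto
  finally show ?thesis by (simp add: power2_eq_square)
qed

lemma cmod_sq_Re: "(cmod z)^2 = Re (z * cnj z)"
  by (metis Re_complex_of_real complex_norm_square)

lemma tm_cnj_prod:
  "trig_mode L (fst n) (snd n) x y * cnj (trig_mode L (fst n') (snd n') x y) =
   E L (fst n - fst n') x * E L (snd n - snd n') y"
proof -
  have "trig_mode L (fst n) (snd n) x y * cnj (trig_mode L (fst n') (snd n') x y) =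
     (E L (fst n) x * E L (- fst n') x) * (E L (snd n) y * E L (- snd n') y)"
    unfolding trig_mode_E by (simp add: E_cnj mult_ac)
  then show ?thesis unfolding E_add by simp
qed

lemma disc_bound:
  fixes M q N :: nat and d :: "int \<times> int \<Rightarrow> complex"
  assumes L: "L > 0" and N0: "N > 0" and Mq: "2*M+1 \<le> q*N"
  defines "BM \<equiv> {- int M..int M} \<times> {- int M..int M}"
  defines "G \<equiv> (\<lambda>x y. \<Sum>n\<in>BM. d n * trig_mode L (fst n) (snd n) x y)"
  shows "(\<Sum>i\<in>{1..int N}. \<Sum>j\<in>{1..int N}. (cmod (G (node L N off i) (node L N off j)))^2)
      \<le> real (q^2) * (real N)^2 * (\<Sum>n\<in>BM. (cmod (d n))^2)"
proof -
  define nd where "nd = node L N off"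
  define S where "S = (\<lambda>t. \<Sum>i\<in>{1..int N}. E L t (nd i))"
  define R where "R = (\<lambda>n n'::int\<times>int. if int N dvd (fst n - fst n') \<and> int N dvd (snd n - snd n') then (1::real) else 0)"
  define a where "a = (\<lambda>n. cmod (d n))"
  have finBM: "finite BM" unfolding BM_def by simp
  have GG: "G x y * cnj (G x y) = (\<Sum>n\<in>BM. \<Sum>n'\<in>BM. d n * cnj (d n') * (E L (fst n - fst n') x * E L (snd n - snd n') y))" for x y
  proof -
    have "G x y * cnj (G x y) = (\<Sum>n\<in>BM. d n * trig_mode L (fst n) (snd n) x y) * (\<Sum>n'\<in>BM. cnj (d n') * cnj (trig_mode L (fst n') (snd n') x y))"
      unfolding G_def by simp
    also have "\<dots> = (\<Sum>n\<in>BM. \<Sum>n'\<in>BM. d n * cnj (d n') * (trig_mode L (fst n) (snd n) x y * cnj (trig_mode L (fst n') (snd n') x y)))"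
      by (simp add: sum_product mult_ac)
    also have "\<dots> = (\<Sum>n\<in>BM. \<Sum>n'\<in>BM. d n * cnj (d n') * (E L (fst n - fst n') x * E L (snd n - snd n') y))"
      by (simp only: tm_cnj_prod)
    finally show ?thesis .
  qed
  have "(\<Sum>i\<in>{1..int N}. \<Sum>j\<in>{1..int N}. (cmod (G (nd i) (nd j)))^2)
      = Re (\<Sum>i\<in>{1..int N}. \<Sum>j\<in>{1..int N}. G (nd i) (nd j) * cnj (G (nd i) (nd j)))"
    by (simp add: cmod_sq_Re Re_sum)
  also have "(\<Sum>i\<in>{1..int N}. \<Sum>j\<in>{1..int N}. G (nd i) (nd j) * cnj (G (nd i) (nd j)))
      = (\<Sum>n\<in>BM. \<Sum>n'\<in>BM. d n * cnj (d n') * (S (fst n - fst n') * S (snd n - snd n')))"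
  proof -
    have inner: "d n * cnj (d n') * (S (fst n - fst n') * S (snd n - snd n')) =
      (\<Sum>i\<in>{1..int N}. \<Sum>j\<in>{1..int N}. d n * cnj (d n') * (E L (fst n - fst n') (nd i) * E L (snd n - snd n') (nd j)))" for n n' :: "int \<times> int"
      unfolding S_def by (subst sum_product, simp add: sum_distrib_left)
    show ?thesis unfolding GG by (subst swap4) (simp only: inner)
  qed
  also have "Re (\<Sum>n\<in>BM. \<Sum>n'\<in>BM. d n * cnj (d n') * (S (fst n - fst n') * S (snd n - snd n')))
     \<le> cmod (\<Sum>n\<in>BM. \<Sum>n'\<in>BM. d n * cnj (d n') * (S (fst n - fst n') * S (snd n - snd n')))"
    by (rule complex_Re_le_cmod)
  also have "\<dots> \<le> (\<Sum>n\<in>BM. \<Sum>n'\<in>BM. cmod (d n * cnj (d n') * (S (fst n - fst n') * S (snd n - snd n'))))"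
    by (rule order_trans[OF norm_sum sum_mono[OF norm_sum]])
  also have "\<dots> = (\<Sum>n\<in>BM. \<Sum>n'\<in>BM. (real N)^2 * (R n n' * (a n * a n')))"
  proof (intro sum.cong refl)
    fix n n' :: "int \<times> int"
    have "cmod (S (fst n - fst n')) = (if int N dvd (fst n - fst n') then real N else 0)"
      unfolding S_def nd_def by (rule disc_sum_norm[OF L N0])
    moreover have "cmod (S (snd n - snd n')) = (if int N dvd (snd n - snd n') then real N else 0)"
      unfolding S_def nd_def by (rule disc_sum_norm[OF L N0])
    ultimately show "cmod (d n * cnj (d n') * (S (fst n - fst n') * S (snd n - snd n'))) = (real N)^2 * (R n n' * (a n * a n'))"
      unfolding R_def a_def by (simp add: norm_mult power2_eq_square)
  qed
  also have "\<dots> \<le> (\<Sum>n\<in>BM. \<Sum>n'\<in>BM. (real N)^2 * (R n n' * (((a n)^2 + (a n')^2) / 2)))"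
  proof (intro sum_mono mult_left_mono)
    fix n n' :: "int \<times> int"
    show "a n * a n' \<le> ((a n)^2 + (a n')^2) / 2"
      using sum_squares_bound[of "a n" "a n'"] by (simp add: power2_eq_square)
  qed (simp_all add: R_def)
  also have "\<dots> = (real N)^2 * (\<Sum>n\<in>BM. \<Sum>n'\<in>BM. R n n' * (a n)^2)"
  proof -
    have sym: "R n n' = R n' n" for n n' :: "int \<times> int"
      unfolding R_def by (metis dvd_minus_iff minus_diff_eq)
    have "(\<Sum>n\<in>BM. \<Sum>n'\<in>BM. R n n' * (a n')^2) = (\<Sum>n'\<in>BM. \<Sum>n\<in>BM. R n n' * (a n')^2)"
      by (rule sum.swap)
    also have "\<dots> = (\<Sum>n\<in>BM. \<Sum>n'\<in>BM. R n n' * (a n)^2)"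
      using sym by simp
    finally have sw: "(\<Sum>n\<in>BM. \<Sum>n'\<in>BM. R n n' * (a n')^2) = (\<Sum>n\<in>BM. \<Sum>n'\<in>BM. R n n' * (a n)^2)" .
    have "(\<Sum>n\<in>BM. \<Sum>n'\<in>BM. (real N)^2 * (R n n' * (((a n)^2 + (a n')^2) / 2)))
        = (real N)^2 / 2 * ((\<Sum>n\<in>BM. \<Sum>n'\<in>BM. R n n' * (a n)^2) + (\<Sum>n\<in>BM. \<Sum>n'\<in>BM. R n n' * (a n')^2))"
      by (simp add: sum_distrib_left sum.distrib algebra_simps add_divide_distrib)
    then show ?thesis unfolding sw by simp
  qed
  also have "\<dots> \<le> (real N)^2 * (\<Sum>n\<in>BM. real (q^2) * (a n)^2)"
  proof (intro mult_left_mono sum_mono)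
    fix n assume "n \<in> BM"
    have "(\<Sum>n'\<in>BM. R n n' * (a n)^2) = (\<Sum>n'\<in>BM. R n n') * (a n)^2"
      by (simp add: sum_distrib_right)
    also have "(\<Sum>n'\<in>BM. R n n') = real (card {n'\<in>BM. int N dvd (fst n - fst n') \<and> int N dvd (snd n - snd n')})"
      unfolding R_def using finBM by (simp add: sum.If_cases Int_def conj_commute)
    also have "\<dots> \<le> real (q^2)"
      using card_class[OF N0 Mq, of n] unfolding BM_def by simp
    finally show "(\<Sum>n'\<in>BM. R n n' * (a n)^2) \<le> real (q^2) * (a n)^2"
      by (simp add: mult_right_mono)
  qed simp
  also have "\<dots> = real (q^2) * (real N)^2 * (\<Sum>n\<in>BM. (cmod (d n))^2)"
    unfolding a_def by (simp add: sum_distrib_left mult_ac)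
  finally show ?thesis unfolding nd_def .
qed

lemma E_scaleR: "E L t x = exp (x *\<^sub>R (2 * pi * \<i> * of_int t / of_real L))"
  unfolding E_def scaleR_conv_of_real by (simp add: field_simps)

lemma E_cont [continuous_intros]: "continuous_on S f \<Longrightarrow> continuous_on S (\<lambda>x. E L t (f x))"
  unfolding E_scaleR by (intro continuous_intros)

lemma int1d:
  assumes L: "L > 0"
  shows "integral {0..L} (E L t) = (if t = 0 then complex_of_real L else 0)"
proof (cases "t = 0")
  case True
  have "E L 0 = (\<lambda>x. 1)" by (rule ext) simp
  then show ?thesis using L True by (simp add: scaleR_conv_of_real)
next
  case False
  define A where "A = 2 * pi * \<i> * of_int t / (of_real L :: complex)"
  have A0: "A \<noteq> 0" unfolding A_def using False L by simp
  define F where "F = (\<lambda>x::real. exp (x *\<^sub>R A) / A)"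
  have "((\<lambda>x. exp (x *\<^sub>R A)) has_integral F L - F 0) {0..L}"
  proof (rule fundamental_theorem_of_calculus)
    show "0 \<le> L" using L by simp
    fix x :: real assume "x \<in> {0..L}"
    have "((\<lambda>x. exp (x *\<^sub>R A) / A) has_vector_derivative (exp (x *\<^sub>R A) * A / A)) (at x within {0..L})"
      by (intro has_vector_derivative_divide exp_scaleR_has_vector_derivative_right)
    then show "(F has_vector_derivative exp (x *\<^sub>R A)) (at x within {0..L})"
      unfolding F_def using A0 by simp
  qed
  moreover have "F L - F 0 = 0"
  proof -
    have "L *\<^sub>R A = 2 * pi * \<i> * complex_of_real (real_of_int t)"
      unfolding A_def scaleR_conv_of_real using L by (simp add: field_simps)
    then have "exp (L *\<^sub>R A) = 1" using exp_2pi_int by simp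
    then show ?thesis unfolding F_def by simp
  qed
  ultimately have "(E L t has_integral 0) {0..L}"
    unfolding E_scaleR A_def[symmetric] by simp
  then show ?thesis using False by (simp add: integral_unique)
qed

lemma int2d:
  assumes L: "L > 0"
  shows "integral (cbox (0,0) (L,L)) (\<lambda>z. E L t1 (fst z) * E L t2 (snd z)) = (if t1 = 0 \<and> t2 = 0 then complex_of_real (L^2) else 0)"
proof -
  have "integral (cbox (0,0) (L,L)) (\<lambda>z. E L t1 (fst z) * E L t2 (snd z))
     = integral (cbox 0 L) (\<lambda>x. integral (cbox 0 L) (\<lambda>y. E L t1 x * E L t2 y))"
    by (subst integral_prod_continuous) (auto intro!: continuous_intros)
  also have "\<dots> = integral {0..L} (E L t1) * integral {0..L} (E L t2)"
    by (simp add: integral_mult_right integral_mult_left)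
  also have "\<dots> = (if t1 = 0 \<and> t2 = 0 then complex_of_real (L^2) else 0)"
    unfolding int1d[OF L] by (simp add: power2_eq_square)
  finally show ?thesis .
qed

lemma GG_expand:
  fixes B :: "(int \<times> int) set" and d :: "int \<times> int \<Rightarrow> complex"
  shows "(\<Sum>n\<in>B. d n * trig_mode L (fst n) (snd n) x y) * cnj (\<Sum>n\<in>B. d n * trig_mode L (fst n) (snd n) x y)
     = (\<Sum>n\<in>B. \<Sum>n'\<in>B. d n * cnj (d n') * (E L (fst n - fst n') x * E L (snd n - snd n') y))"
proof -
  have "(\<Sum>n\<in>B. d n * trig_mode L (fst n) (snd n) x y) * cnj (\<Sum>n\<in>B. d n * trig_mode L (fst n) (snd n) x y)
     = (\<Sum>n\<in>B. d n * trig_mode L (fst n) (snd n) x y) * (\<Sum>n'\<in>B. cnj (d n') * cnj (trig_mode L (fst n') (snd n') x y))"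
    by simp
  also have "\<dots> = (\<Sum>n\<in>B. \<Sum>n'\<in>B. d n * cnj (d n') * (trig_mode L (fst n) (snd n) x y * cnj (trig_mode L (fst n') (snd n') x y)))"
    by (simp add: sum_product mult_ac)
  also have "\<dots> = (\<Sum>n\<in>B. \<Sum>n'\<in>B. d n * cnj (d n') * (E L (fst n - fst n') x * E L (snd n - snd n') y))"
    by (simp only: tm_cnj_prod)
  finally show ?thesis .
qed

lemma box_pair_real: "box (a::real, c::real) (b, d) = {a<..<b} \<times> {c<..<d}"
  by (auto simp: box_def Basis_prod_def inner_prod_def)

lemma parseval:
  fixes B :: "(int \<times> int) set" and d :: "int \<times> int \<Rightarrow> complex"
  assumes L: "L > 0" and finB: "finite B"
  defines "G \<equiv> (\<lambda>x y. \<Sum>n\<in>B. d n * trig_mode L (fst n) (snd n) x y)"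
  shows "(LINT z : {0<..<L} \<times> {0<..<L} | lborel. (cmod (G (fst z) (snd z)))^2) = L^2 * (\<Sum>n\<in>B. (cmod (d n))^2)"
proof -
  define H where "H = (\<lambda>z::real\<times>real. (cmod (G (fst z) (snd z)))^2)"
  define C0 where "C0 = cbox (0::real,0::real) (L,L)"
  define S0 where "S0 = {0<..<L} \<times> {0<..<L::real}"
  have Gc: "continuous_on UNIV (\<lambda>z::real\<times>real. G (fst z) (snd z))"
    unfolding G_def trig_mode_E by (intro continuous_intros)
  have Hc: "continuous_on UNIV H"
    unfolding H_def by (intro continuous_intros Gc)
  have "set_integrable lborel C0 H"
    unfolding set_integrable_def C0_def
    by (rule borel_integrable_compact) (auto intro: continuous_on_subset[OF Hc])
  moreover have "S0 \<in> sets lborel" unfolding S0_def by (simp add: borel_open open_Times)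
  moreover have "S0 \<subseteq> C0" unfolding S0_def C0_def cbox_Pair_eq by auto
  ultimately have "set_integrable lborel S0 H" by (rule set_integrable_subset)
  then have "(LINT z : S0 | lborel. H z) = integral S0 H"
    by (rule set_borel_integral_eq_integral)
  also have "integral S0 H = integral C0 H"
    unfolding S0_def C0_def box_pair_real[symmetric] by (rule integral_open_interval)
  finally have eq1: "(LINT z : S0 | lborel. H z) = integral C0 H" .
  have HC: "complex_of_real (H z) = (\<Sum>n\<in>B. \<Sum>n'\<in>B. d n * cnj (d n') * (E L (fst n - fst n') (fst z) * E L (snd n - snd n') (snd z)))" for z
    unfolding H_def G_def complex_norm_square GG_expand ..
  have "((\<lambda>z. complex_of_real (H z)) has_integral complex_of_real (integral C0 H)) C0"
    by (rule has_integral_of_real, rule integrable_integral, unfold C0_def,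
        rule integrable_continuous, rule continuous_on_subset[OF Hc], simp)
  moreover have "((\<lambda>z. complex_of_real (H z)) has_integral (\<Sum>n\<in>B. \<Sum>n'\<in>B. d n * cnj (d n') * (if n = n' then complex_of_real (L^2) else 0))) C0"
    unfolding HC
  proof (intro has_integral_sum finB has_integral_mult_right)
    fix n n' :: "int \<times> int"
    have "((\<lambda>z. E L (fst n - fst n') (fst z) * E L (snd n - snd n') (snd z)) has_integral
       integral C0 (\<lambda>z. E L (fst n - fst n') (fst z) * E L (snd n - snd n') (snd z))) C0"
      unfolding C0_def by (intro integrable_integral integrable_continuous continuous_intros continuous_on_fst continuous_on_snd continuous_on_id)
    moreover have "integral C0 (\<lambda>z. E L (fst n - fst n') (fst z) * E L (snd n - snd n') (snd z)) = (if n = n' then complex_of_real (L^2) else 0)"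
      unfolding C0_def int2d[OF L] by (simp add: prod_eq_iff)
    ultimately show "((\<lambda>z. E L (fst n - fst n') (fst z) * E L (snd n - snd n') (snd z)) has_integral (if n = n' then complex_of_real (L^2) else 0)) C0"
      by simp
  qed
  ultimately have "complex_of_real (integral C0 H) = (\<Sum>n\<in>B. \<Sum>n'\<in>B. d n * cnj (d n') * (if n = n' then complex_of_real (L^2) else 0))"
    by (rule has_integral_unique)
  also have "\<dots> = (\<Sum>n\<in>B. d n * cnj (d n) * complex_of_real (L^2))"
    using finB by (simp add: if_distrib sum.delta cong: if_cong)
  also have "\<dots> = complex_of_real (L^2 * (\<Sum>n\<in>B. (cmod (d n))^2))"
    unfolding of_real_mult of_real_sum complex_norm_square by (simp add: sum_distrib_left mult_ac)
  finally have "integral C0 H = L^2 * (\<Sum>n\<in>B. (cmod (d n))^2)" by (simp only: of_real_eq_iff)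
  then show ?thesis using eq1 unfolding H_def S0_def by simp
qed

lemma key:
  fixes M q N :: nat and S :: "'s set" and a :: "'s \<Rightarrow> complex" and \<omega> :: "'s \<Rightarrow> int \<times> int"
  assumes L: "L > 0" and N0: "N > 0" and Mq: "2*M+1 \<le> q*N" and finS: "finite S"
    and rng: "\<And>s. s \<in> S \<Longrightarrow> \<bar>fst (\<omega> s)\<bar> \<le> int M \<and> \<bar>snd (\<omega> s)\<bar> \<le> int M"
  defines "G \<equiv> (\<lambda>x y. \<Sum>s\<in>S. a s * trig_mode L (fst (\<omega> s)) (snd (\<omega> s)) x y)"
  shows "(L / real N)^2 * (\<Sum>i\<in>{1..int N}. \<Sum>j\<in>{1..int N}. (cmod (G (node L N off i) (node L N off j)))^2)
      \<le> real (q^2) * (LINT z : {0<..<L} \<times> {0<..<L} | lborel. (cmod (G (fst z) (snd z)))^2)"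
    "0 \<le> (LINT z : {0<..<L} \<times> {0<..<L} | lborel. (cmod (G (fst z) (snd z)))^2)"
proof -
  define BM where "BM = {- int M..int M} \<times> {- int M..int M}"
  define d where "d = (\<lambda>n. \<Sum>s\<in>{s. s \<in> S \<and> \<omega> s = n}. a s)"
  have finBM: "finite BM" unfolding BM_def by simp
  have img: "\<omega> ` S \<subseteq> BM"
  proof
    fix n assume "n \<in> \<omega> ` S"
    then obtain s where s: "s \<in> S" "n = \<omega> s" by auto
    show "n \<in> BM" using rng[OF s(1)] unfolding BM_def s(2) by (cases "\<omega> s") (auto simp: abs_le_iff)
  qed
  have Geq: "G = (\<lambda>x y. \<Sum>n\<in>BM. d n * trig_mode L (fst n) (snd n) x y)"
  proof (intro ext)
    fix x y
    have "(\<Sum>n\<in>BM. d n * trig_mode L (fst n) (snd n) x y)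
       = (\<Sum>n\<in>BM. \<Sum>s\<in>{s. s \<in> S \<and> \<omega> s = n}. a s * trig_mode L (fst (\<omega> s)) (snd (\<omega> s)) x y)"
      unfolding d_def by (intro sum.cong refl) (simp add: sum_distrib_right)
    also have "\<dots> = G x y"
      unfolding G_def by (rule sum.group[OF finS finBM img])
    finally show "G x y = (\<Sum>n\<in>BM. d n * trig_mode L (fst n) (snd n) x y)" by simp
  qed
  have P: "(LINT z : {0<..<L} \<times> {0<..<L} | lborel. (cmod (G (fst z) (snd z)))^2) = L^2 * (\<Sum>n\<in>BM. (cmod (d n))^2)"
    unfolding Geq by (rule parseval[OF L finBM])
  have D: "(\<Sum>i\<in>{1..int N}. \<Sum>j\<in>{1..int N}. (cmod (G (node L N off i) (node L N off j)))^2)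
      \<le> real (q^2) * (real N)^2 * (\<Sum>n\<in>BM. (cmod (d n))^2)"
    unfolding Geq BM_def by (rule disc_bound[OF L N0 Mq])
  have "(L / real N)^2 * (\<Sum>i\<in>{1..int N}. \<Sum>j\<in>{1..int N}. (cmod (G (node L N off i) (node L N off j)))^2)
     \<le> (L / real N)^2 * (real (q^2) * (real N)^2 * (\<Sum>n\<in>BM. (cmod (d n))^2))"
    by (rule mult_left_mono[OF D]) simp
  also have "\<dots> = real (q^2) * (L^2 * (\<Sum>n\<in>BM. (cmod (d n))^2))"
    using N0 by (simp add: field_simps)
  finally show "(L / real N)^2 * (\<Sum>i\<in>{1..int N}. \<Sum>j\<in>{1..int N}. (cmod (G (node L N off i) (node L N off j)))^2)
      \<le> real (q^2) * (LINT z : {0<..<L} \<times> {0<..<L} | lborel. (cmod (G (fst z) (snd z)))^2)"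
    unfolding P .
  show "0 \<le> (LINT z : {0<..<L} \<times> {0<..<L} | lborel. (cmod (G (fst z) (snd z)))^2)"
    unfolding P by (intro mult_nonneg_nonneg sum_nonneg) auto
qed

lemma tm_mult: "trig_mode L l m x y * trig_mode L l' m' x y = trig_mode L (l + l') (m + m') x y"
  unfolding trig_mode_E by (simp add: E_add[symmetric] mult_ac)

lemma tp_mult:
  fixes A :: "'a set" and B :: "'b set"
  assumes "finite A" "finite B"
  shows "(\<Sum>s\<in>A. a s * trig_mode L (fst (\<omega> s)) (snd (\<omega> s)) x y) * (\<Sum>t\<in>B. b t * trig_mode L (fst (\<nu> t)) (snd (\<nu> t)) x y)
    = (\<Sum>u\<in>A \<times> B. (a (fst u) * b (snd u)) * trig_mode L (fst (\<omega> (fst u)) + fst (\<nu> (snd u))) (snd (\<omega> (fst u)) + snd (\<nu> (snd u))) x y)"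
proof -
  have "(\<Sum>s\<in>A. a s * trig_mode L (fst (\<omega> s)) (snd (\<omega> s)) x y) * (\<Sum>t\<in>B. b t * trig_mode L (fst (\<nu> t)) (snd (\<nu> t)) x y)
     = (\<Sum>s\<in>A. \<Sum>t\<in>B. (a s * b t) * trig_mode L (fst (\<omega> s) + fst (\<nu> t)) (snd (\<omega> s) + snd (\<nu> t)) x y)"
    unfolding sum_product by (intro sum.cong refl) (simp add: tm_mult[symmetric] mult_ac)
  also have "\<dots> = (\<Sum>u\<in>A \<times> B. (a (fst u) * b (snd u)) * trig_mode L (fst (\<omega> (fst u)) + fst (\<nu> (snd u))) (snd (\<omega> (fst u)) + snd (\<nu> (snd u))) x y)"
    by (simp add: sum.cartesian_product case_prod_beta)
  finally show ?thesis .
qed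

lemma F_rep:
  "trig_interp L K off g x y = (\<Sum>k\<in>{- int K..int K} \<times> {- int K..int K}. trig_coeffs L K off g (fst k) (snd k) * trig_mode L (fst (id k)) (snd (id k)) x y)"
  unfolding trig_interp_def by (simp add: sum.cartesian_product case_prod_beta)

lemma final_generic:
  fixes S :: "'s set" and M q K :: nat
  assumes L: "L > 0" and g: "grid_periodic (2*K+1) g" and Mq: "2*M+1 \<le> q*(2*K+1)" and finS: "finite S"
    and rng: "\<And>s. s \<in> S \<Longrightarrow> \<bar>fst (\<omega> s)\<bar> \<le> int M \<and> \<bar>snd (\<omega> s)\<bar> \<le> int M"
    and rep: "\<And>x y. (trig_interp L K off g x y)^q = (\<Sum>s\<in>S. a s * trig_mode L (fst (\<omega> s)) (snd (\<omega> s)) x y)"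
  shows "disc_norm L (2*K+1) (2*q) g \<le> (real (q^2)) powr (1 / real (2*q)) * Lp_norm_box L (2*q) (trig_interp L K off g)"
proof -
  define N where "N = 2*K+1"
  have N0: "N > 0" unfolding N_def by simp
  define F where "F = trig_interp L K off g"
  define G where "G = (\<lambda>x y. \<Sum>s\<in>S. a s * trig_mode L (fst (\<omega> s)) (snd (\<omega> s)) x y)"
  have FG: "(cmod (F x y))^(2*q) = (cmod (G x y))^2" for x y
    unfolding G_def rep[symmetric] F_def by (simp add: norm_power power_mult[symmetric] mult.commute)
  have gF: "\<bar>g i j\<bar> ^ (2*q) = (cmod (G (node L N off i) (node L N off j)))^2" for i j
  proof -
    have "complex_of_real (g i j) = F (node L N off i) (node L N off j)"
      unfolding F_def N_def using trig_interp_node[OF L g] by simp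
    then have "\<bar>g i j\<bar> = cmod (F (node L N off i) (node L N off j))"
      by (metis norm_of_real)
    then show ?thesis using FG by simp
  qed
  define X where "X = (\<Sum>i\<in>{1..int N}. \<Sum>j\<in>{1..int N}. \<bar>g i j\<bar> ^ (2*q))"
  define Y where "Y = (LINT z : {0<..<L} \<times> {0<..<L} | lborel. (cmod (F (fst z) (snd z)))^(2*q))"
  have Y': "Y = (LINT z : {0<..<L} \<times> {0<..<L} | lborel. (cmod (G (fst z) (snd z)))^2)"
    unfolding Y_def FG ..
  have X': "X = (\<Sum>i\<in>{1..int N}. \<Sum>j\<in>{1..int N}. (cmod (G (node L N off i) (node L N off j)))^2)"
    unfolding X_def gF ..
  have k1: "(L / real N)^2 * X \<le> real (q^2) * Y" and k2: "0 \<le> Y"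
    unfolding X' Y' G_def using key(1)[OF L N0 Mq[folded N_def] finS rng, where a=a and off=off] key(2)[OF L N0 Mq[folded N_def] finS rng, where a=a] by auto
  have "disc_norm L (2*K+1) (2*q) g = ((L / real N)^2 * X) powr (1 / real (2*q))"
    unfolding disc_norm_def X_def N_def ..
  also have "\<dots> \<le> (real (q^2) * Y) powr (1 / real (2*q))"
    by (rule powr_mono2) (use k1 in \<open>auto simp: X_def intro!: mult_nonneg_nonneg sum_nonneg\<close>)
  also have "\<dots> = (real (q^2)) powr (1 / real (2*q)) * Y powr (1 / real (2*q))"
    using k2 by (simp add: powr_mult)
  also have "Y powr (1 / real (2*q)) = Lp_norm_box L (2*q) (trig_interp L K off g)"
    unfolding Lp_norm_box_def Y_def F_def ..
  finally show ?thesis .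
qed

lemma const4: "(real (2^2)) powr (1 / real (2*2)) = sqrt (real 4 / 2)"
proof -
  have "(real (2^2)) powr (1 / real (2*2)) = ((2::real) powr 2) powr (1/4)" by simp
  also have "\<dots> = 2 powr (2 * (1/4))" by (rule powr_powr)
  also have "\<dots> = 2 powr (1/2)" by simp
  also have "\<dots> = sqrt 2" by (simp add: powr_half_sqrt)
  finally show ?thesis by simp
qed

lemma const6: "(real (3^2)) powr (1 / real (2*3)) \<le> sqrt (real 6 / 2)"
proof -
  have "(real (3^2)) powr (1 / real (2*3)) = ((3::real) powr 2) powr (1/6)" by simp
  also have "\<dots> = 3 powr (2 * (1/6))" by (rule powr_powr)
  also have "\<dots> = 3 powr (1/3)" by simp
  also have "\<dots> \<le> 3 powr (1/2)" by (rule powr_mono) auto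
  also have "\<dots> = sqrt 3" by (simp add: powr_half_sqrt)
  finally show ?thesis by simp
qed

lemma one_fn:
  fixes K p :: nat
  assumes L: "L > 0" and g: "grid_periodic (2*K+1) g" and p: "p \<in> {4, 6}"
  shows "disc_norm L (2*K+1) p g \<le> sqrt (real p / 2) * Lp_norm_box L p (trig_interp L K off g)"
proof -
  define BK where "BK = {- int K..int K} \<times> {- int K..int K}"
  define c where "c = (\<lambda>k::int\<times>int. trig_coeffs L K off g (fst k) (snd k))"
  have finBK: "finite BK" unfolding BK_def by simp
  have F: "trig_interp L K off g x y = (\<Sum>k\<in>BK. c k * trig_mode L (fst (id k)) (snd (id k)) x y)" for x y
    unfolding BK_def c_def by (rule F_rep)
  define \<omega>2 where "\<omega>2 = (\<lambda>u::(int\<times>int)\<times>(int\<times>int). (fst (id (fst u)) + fst (id (snd u)), snd (id (fst u)) + snd (id (snd u))))"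
  define a2 where "a2 = (\<lambda>u::(int\<times>int)\<times>(int\<times>int). c (fst u) * c (snd u))"
  have rep2: "(trig_interp L K off g x y)^2 = (\<Sum>s\<in>BK \<times> BK. a2 s * trig_mode L (fst (\<omega>2 s)) (snd (\<omega>2 s)) x y)" for x y
    unfolding power2_eq_square F tp_mult[OF finBK finBK] a2_def \<omega>2_def by simp
  have rng2: "\<bar>fst (\<omega>2 s)\<bar> \<le> int (2*K) \<and> \<bar>snd (\<omega>2 s)\<bar> \<le> int (2*K)" if "s \<in> BK \<times> BK" for s
    using that unfolding \<omega>2_def BK_def by (auto simp: mem_Times_iff)
  show ?thesis
  proof (cases "p = 4")
    case True
    have "disc_norm L (2*K+1) (2*2) g \<le> (real (2^2)) powr (1 / real (2*2)) * Lp_norm_box L (2*2) (trig_interp L K off g)"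
      by (rule final_generic[OF L g _ _ rng2 rep2]) (auto simp: finBK)
    then show ?thesis using True const4 by simp
  next
    case False
    then have p6: "p = 6" using p by simp
    define \<omega>3 where "\<omega>3 = (\<lambda>v::((int\<times>int)\<times>(int\<times>int))\<times>(int\<times>int). (fst (\<omega>2 (fst v)) + fst (id (snd v)), snd (\<omega>2 (fst v)) + snd (id (snd v))))"
    define a3 where "a3 = (\<lambda>v::((int\<times>int)\<times>(int\<times>int))\<times>(int\<times>int). a2 (fst v) * c (snd v))"
    have rep3: "(trig_interp L K off g x y)^3 = (\<Sum>s\<in>(BK \<times> BK) \<times> BK. a3 s * trig_mode L (fst (\<omega>3 s)) (snd (\<omega>3 s)) x y)" for x y
    proof -
      have "(trig_interp L K off g x y)^3 = (trig_interp L K off g x y)^2 * trig_interp L K off g x y"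
        by (simp add: power_numeral_reduce)
      also have "\<dots> = (\<Sum>s\<in>(BK \<times> BK) \<times> BK. a3 s * trig_mode L (fst (\<omega>3 s)) (snd (\<omega>3 s)) x y)"
        unfolding rep2 unfolding F tp_mult[OF finite_cartesian_product[OF finBK finBK] finBK] a3_def \<omega>3_def by simp
      finally show ?thesis .
    qed
    have rng3: "\<bar>fst (\<omega>3 s)\<bar> \<le> int (3*K) \<and> \<bar>snd (\<omega>3 s)\<bar> \<le> int (3*K)" if "s \<in> (BK \<times> BK) \<times> BK" for s
      using that unfolding \<omega>3_def \<omega>2_def BK_def by (auto simp: mem_Times_iff)
    have "disc_norm L (2*K+1) (2*3) g \<le> (real (3^2)) powr (1 / real (2*3)) * Lp_norm_box L (2*3) (trig_interp L K off g)"
      by (rule final_generic[OF L g _ _ rng3 rep3]) (auto simp: finBK)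
    moreover have "0 \<le> Lp_norm_box L (2*3) (trig_interp L K off g)"
      unfolding Lp_norm_box_def by simp
    ultimately have "disc_norm L (2*K+1) (2*3) g \<le> sqrt (real 6 / 2) * Lp_norm_box L (2*3) (trig_interp L K off g)"
      using const6 by (meson mult_right_mono order_trans)
    then show ?thesis using p6 by simp
  qed
qed

theorem lemmaA2:
  fixes L :: real and K p :: nat and \<phi> f :: "int \<Rightarrow> int \<Rightarrow> real"
  assumes "L > 0"
    and "grid_periodic (2*K+1) \<phi>"
    and "grid_periodic (2*K+1) f"
    and "p \<in> {4, 6}"
  shows "disc_norm L (2*K+1) p \<phi> \<le> sqrt (real p / 2) * Lp_norm_box L p (trig_interp L K (1/2) \<phi>)
       \<and> disc_norm L (2*K+1) p f \<le> sqrt (real p / 2) * Lp_norm_box L p (trig_interp L K 0 f)"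
  using one_fn[OF assms(1) assms(2) assms(4)] one_fn[OF assms(1) assms(3) assms(4)] by blast

end
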